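(* Let $G=(V,E)$ be a connected graph with $n$ vertices and let $t$ be a positive integer. Then $G$ is acyclic if and only if it admits a correct acyclicity labeling (with block length $t$).
   Context: An acyclicity label of a vertex $v$ consists of: an orientation label $a(v)\in\{0,1,2\}$; a block label $b(v)\in\{\textsc{head},\textsc{mid},\textsc{tail}\}$; a block color $c(v)\in\{0,1\}$; and a distance label $d(v)\in\{0,1\}^{(\log n)/t}$. The labeling is correct if all four of the following hold. (Orientation) Every $v$ has at most one neighbor $P(v)$ (its parent) with $a(P(v))\equiv a(v)-1\pmod 3$, and all other neighbors $w$ (its children) satisfy $a(w)\equiv a(v)+1\pmod 3$; if $v$ has no parent, write $P(v)=\varnothing$ and call $v$ a root. Edges are oriented from parent to child. (Block labels) (1) $b(v)=\textsc{head}$ iff $P(v)=\varnothing$ or $b(P(v))=\textsc{tail}$; (2) $b(v)=\textsc{tail}$ iff there is an oriented path $v_0,v_1,\dots,v_{t-1}=v$ of $t$ vertices with $b(v_0)=\textsc{head}$ — such a path is called a block; (3) otherwise $b(v)=\textsc{mid}$; (4) for every $v$ there is an oriented path $w_0,\dots,w_{k-1}=v$ with $k<t$ and $b(w_0)=\textsc{head}$. For a block $B=(v_0,\dots,v_{t-1})$, its value $D(B)$ is the integer whose binary expansion is the concatenation $d(v_{t-1})d(v_{t-2})\cdots d(v_0)$. A block $B=(v_0,\dots,v_{t-1})$ is the parent of a block $B'=(w_0,\dots,w_{t-1})$ if $P(w_0)=v_{t-1}$. (Block coloring) all vertices in a block have the same color, and if $B$ is the parent of $B'$ then vertices of $B$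 and $B'$ have different colors. (Distance labels) for every block $B=(v_0,\dots,v_{t-1})$, $D(B)=0$ iff $v_0$ is a root; and whenever $B$ is the parent of $B'$, $D(B')=D(B)+t$. *)

theory Defs
  imports Complex_Main
begin

definition simple_graph :: "'a set \<Rightarrow> ('a \<Rightarrow> 'a \<Rightarrow> bool) \<Rightarrow> bool" where
  "simple_graph V E \<longleftrightarrow> finite V \<and> (\<forall>u v. E u v \<longrightarrow> E v u) \<and> (\<forall>v. \<not> E v v)
     \<and> (\<forall>u v. E u v \<longrightarrow> u \<in> V \<and> v \<in> V)"

definition connected_graph :: "'a set \<Rightarrow> ('a \<Rightarrow> 'a \<Rightarrow> bool) \<Rightarrow> bool" where
  "connected_graph V E \<longleftrightarrow> (\<forall>u\<in>V. \<forall>v\<in>V. E\<^sup>*\<^sup>* u v)"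

definition is_cycle :: "'a set \<Rightarrow> ('a \<Rightarrow> 'a \<Rightarrow> bool) \<Rightarrow> 'a list \<Rightarrow> bool" where
  "is_cycle V E cs \<longleftrightarrow> 3 \<le> length cs \<and> distinct cs \<and> set cs \<subseteq> V
     \<and> (\<forall>i < length cs. E (cs ! i) (cs ! ((i + 1) mod length cs)))"

definition acyclic_graph :: "'a set \<Rightarrow> ('a \<Rightarrow> 'a \<Rightarrow> bool) \<Rightarrow> bool" where
  "acyclic_graph V E \<longleftrightarrow> \<not> (\<exists>cs. is_cycle V E cs)"

datatype block_label = Head | Mid | Tail

definition is_parent :: "('a \<Rightarrow> 'a \<Rightarrow> bool) \<Rightarrow> ('a \<Rightarrow> nat) \<Rightarrow> 'a \<Rightarrow> 'a \<Rightarrow> bool" where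
  "is_parent E a v w \<longleftrightarrow> E v w \<and> (a w + 1) mod 3 = a v"

definition is_root :: "('a \<Rightarrow> 'a \<Rightarrow> bool) \<Rightarrow> ('a \<Rightarrow> nat) \<Rightarrow> 'a \<Rightarrow> bool" where
  "is_root E a v \<longleftrightarrow> \<not> (\<exists>w. is_parent E a v w)"

definition oriented_path :: "'a set \<Rightarrow> ('a \<Rightarrow> 'a \<Rightarrow> bool) \<Rightarrow> ('a \<Rightarrow> nat) \<Rightarrow> 'a list \<Rightarrow> bool" where
  "oriented_path V E a ps \<longleftrightarrow> ps \<noteq> [] \<and> set ps \<subseteq> V
     \<and> (\<forall>i. Suc i < length ps \<longrightarrow> is_parent E a (ps ! Suc i) (ps ! i))"

definition orientation_ok :: "'a set \<Rightarrow> ('a \<Rightarrow> 'a \<Rightarrow> bool) \<Rightarrow> ('a \<Rightarrow> nat) \<Rightarrow> bool" where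
  "orientation_ok V E a \<longleftrightarrow> (\<forall>v\<in>V. a v < 3
     \<and> (\<forall>w1 w2. is_parent E a v w1 \<and> is_parent E a v w2 \<longrightarrow> w1 = w2)
     \<and> (\<forall>w. E v w \<and> \<not> is_parent E a v w \<longrightarrow> a w = (a v + 1) mod 3))"

definition is_block :: "'a set \<Rightarrow> ('a \<Rightarrow> 'a \<Rightarrow> bool) \<Rightarrow> nat \<Rightarrow> ('a \<Rightarrow> nat) \<Rightarrow> ('a \<Rightarrow> block_label)
     \<Rightarrow> 'a list \<Rightarrow> bool" where
  "is_block V E t a b B \<longleftrightarrow> oriented_path V E a B \<and> length B = t \<and> b (hd B) = Head"

definition block_labels_ok :: "'a set \<Rightarrow> ('a \<Rightarrow> 'a \<Rightarrow> bool) \<Rightarrow> nat \<Rightarrow> ('a \<Rightarrow> nat)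
     \<Rightarrow> ('a \<Rightarrow> block_label) \<Rightarrow> bool" where
  "block_labels_ok V E t a b \<longleftrightarrow> (\<forall>v\<in>V.
       (b v = Head \<longleftrightarrow> is_root E a v \<or> (\<exists>w. is_parent E a v w \<and> b w = Tail))
     \<and> (b v = Tail \<longleftrightarrow> (\<exists>ps. is_block V E t a b ps \<and> last ps = v))
     \<and> (b v = Mid \<longleftrightarrow> \<not> (b v = Head) \<and> \<not> (b v = Tail))
     \<and> (\<exists>ps. oriented_path V E a ps \<and> length ps \<le> t \<and> last ps = v \<and> b (hd ps) = Head))"

definition bits_val :: "bool list \<Rightarrow> nat" where
  "bits_val bs = foldl (\<lambda>acc x. 2 * acc + (if x then 1 else 0)) 0 bs"

definition block_value :: "('a \<Rightarrow> bool list) \<Rightarrow> 'a list \<Rightarrow> nat" where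
  "block_value d B = bits_val (concat (map d (rev B)))"

definition block_parent :: "('a \<Rightarrow> 'a \<Rightarrow> bool) \<Rightarrow> ('a \<Rightarrow> nat) \<Rightarrow> 'a list \<Rightarrow> 'a list \<Rightarrow> bool" where
  "block_parent E a B B' \<longleftrightarrow> is_parent E a (hd B') (last B)"

definition block_coloring_ok :: "'a set \<Rightarrow> ('a \<Rightarrow> 'a \<Rightarrow> bool) \<Rightarrow> nat \<Rightarrow> ('a \<Rightarrow> nat)
     \<Rightarrow> ('a \<Rightarrow> block_label) \<Rightarrow> ('a \<Rightarrow> bool) \<Rightarrow> bool" where
  "block_coloring_ok V E t a b c \<longleftrightarrow>
     (\<forall>B. is_block V E t a b B \<longrightarrow> (\<forall>u\<in>set B. \<forall>u'\<in>set B. c u = c u'))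
   \<and> (\<forall>B B'. is_block V E t a b B \<and> is_block V E t a b B' \<and> block_parent E a B B'
        \<longrightarrow> (\<forall>u\<in>set B. \<forall>u'\<in>set B'. c u \<noteq> c u'))"

definition dist_label_len :: "nat \<Rightarrow> nat \<Rightarrow> nat" where
  "dist_label_len n t = nat \<lceil>log 2 (real n) / real t\<rceil>"

definition distance_labels_ok :: "'a set \<Rightarrow> ('a \<Rightarrow> 'a \<Rightarrow> bool) \<Rightarrow> nat \<Rightarrow> ('a \<Rightarrow> nat)
     \<Rightarrow> ('a \<Rightarrow> block_label) \<Rightarrow> ('a \<Rightarrow> bool list) \<Rightarrow> bool" where
  "distance_labels_ok V E t a b d \<longleftrightarrow>
     (\<forall>v\<in>V. length (d v) = dist_label_len (card V) t)
   \<and> (\<forall>B. is_block V E t a b B \<longrightarrow> (block_value d B = 0 \<longleftrightarrow> is_root E a (hd B)))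
   \<and> (\<forall>B B'. is_block V E t a b B \<and> is_block V E t a b B' \<and> block_parent E a B B'
        \<longrightarrow> block_value d B' = block_value d B + t)"

definition correct_acyclicity_labeling :: "'a set \<Rightarrow> ('a \<Rightarrow> 'a \<Rightarrow> bool) \<Rightarrow> nat
     \<Rightarrow> ('a \<Rightarrow> nat) \<Rightarrow> ('a \<Rightarrow> block_label) \<Rightarrow> ('a \<Rightarrow> bool) \<Rightarrow> ('a \<Rightarrow> bool list) \<Rightarrow> bool" where
  "correct_acyclicity_labeling V E t a b c d \<longleftrightarrow>
     orientation_ok V E a \<and> block_labels_ok V E t a b
   \<and> block_coloring_ok V E t a b c \<and> distance_labels_ok V E t a b d"

end

theory Submission
  imports Defs
begin


definition is_path :: "'a set \<Rightarrow> ('a \<Rightarrow> 'a \<Rightarrow> bool) \<Rightarrow> 'a list \<Rightarrow> bool" where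
  "is_path V E ps \<longleftrightarrow> distinct ps \<and> set ps \<subseteq> V \<and> (\<forall>i. Suc i < length ps \<longrightarrow> E (ps!i) (ps!Suc i))"

lemma leaf_exists:
  assumes sg: "simple_graph V E" and cg: "connected_graph V E" and ac: "acyclic_graph V E"
    and c2: "2 \<le> card V"
  shows "\<exists>l\<in>V. \<exists>p. E l p \<and> (\<forall>q. E l q \<longrightarrow> q = p)"
proof -
  have fin: "finite V" using sg by (simp add: simple_graph_def)
  have sym: "\<And>u v. E u v \<Longrightarrow> E v u" and irr: "\<And>v. \<not> E v v"
    and inV: "\<And>u v. E u v \<Longrightarrow> u \<in> V \<and> v \<in> V" using sg by (auto simp: simple_graph_def)
  obtain u v where uv: "u \<in> V" "v \<in> V" "u \<noteq> v"
  proof -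
    from c2 have "\<not> card V \<le> 1" by simp
    then have "\<not> (\<forall>x\<in>V. \<forall>y\<in>V. x = y)" using card_le_Suc0_iff_eq[OF fin] by auto
    then show ?thesis using that by blast
  qed
  from cg uv have "E\<^sup>*\<^sup>* u v" by (simp add: connected_graph_def)
  then obtain w where Euw: "E u w" using uv(3) by (cases rule: converse_rtranclpE) auto
  define S where "S = {ps. is_path V E ps}"
  have "S \<subseteq> {xs. set xs \<subseteq> V \<and> length xs \<le> card V}"
  proof
    fix ps assume "ps \<in> S"
    then have "distinct ps" "set ps \<subseteq> V" by (auto simp: S_def is_path_def)
    then show "ps \<in> {xs. set xs \<subseteq> V \<and> length xs \<le> card V}"
      using card_mono[OF fin] by (auto simp: distinct_card[symmetric])
  qed
  then have finS: "finite S" using finite_lists_length_le[OF fin] finite_subset by blast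
  have uwS: "[u,w] \<in> S" using Euw inV irr unfolding S_def is_path_def
    by (auto simp: less_Suc_eq)
  define M where "M = Max (length ` S)"
  have "M \<in> length ` S" unfolding M_def using finS uwS by (intro Max_in) auto
  then obtain P where PS: "P \<in> S" and lenP: "length P = M" by auto
  have maxP: "\<And>Q. Q \<in> S \<Longrightarrow> length Q \<le> length P"
    using finS lenP M_def by simp
  have P2: "2 \<le> length P" using maxP[OF uwS] by simp
  have Pp: "distinct P" "set P \<subseteq> V" "\<And>i. Suc i < length P \<Longrightarrow> E (P!i) (P!Suc i)"
    using PS by (auto simp: S_def is_path_def)
  define k where "k = length P - 1"
  define x where "x = P ! k"
  define p where "p = P ! (k - 1)"
  have kP: "k < length P" "1 \<le> k" using P2 by (auto simp: k_def)
  have "E p x" unfolding p_def x_def using Pp(3)[of "k-1"] kP by simp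
  then have Exp: "E x p" by (rule sym)
  have "\<forall>q. E x q \<longrightarrow> q = p"
  proof (intro allI impI)
    fix q assume Exq: "E x q"
    show "q = p"
    proof (cases "q \<in> set P")
      case False
      have "P @ [q] \<in> S" unfolding S_def is_path_def mem_Collect_eq
      proof (intro conjI allI impI)
        show "distinct (P @ [q])" using Pp(1) False by simp
        show "set (P @ [q]) \<subseteq> V" using Pp(2) inV[OF Exq] by simp
        fix i assume i: "Suc i < length (P @ [q])"
        show "E ((P @ [q]) ! i) ((P @ [q]) ! Suc i)"
        proof (cases "Suc i < length P")
          case True then show ?thesis using Pp(3) by (simp add: nth_append)
        next
          case False
          then have ik: "i = k" using i kP by (simp add: k_def)
          then have "(P @ [q]) ! i = x" "(P @ [q]) ! Suc i = q" using kP
            by (auto simp: nth_append k_def x_def)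
          then show ?thesis using Exq by simp
        qed
      qed
      then show ?thesis using maxP[of "P @ [q]"] by simp
    next
      case True
      then obtain i where i: "i < length P" "P ! i = q" by (auto simp: in_set_conv_nth)
      have "i \<noteq> k" using i Exq irr x_def by auto
      show "q = p"
      proof (cases "i = k - 1")
        case True then show ?thesis using i p_def by simp
      next
        case False
        with \<open>i \<noteq> k\<close> i have ik: "i + 2 \<le> k" by (simp add: k_def)
        define cs where "cs = drop i P"
        have lcs: "length cs = length P - i" by (simp add: cs_def)
        have "is_cycle V E cs" unfolding is_cycle_def
        proof (intro conjI allI impI)
          show "3 \<le> length cs" using lcs ik kP by (simp add: k_def)
          show "distinct cs" using Pp(1) by (simp add: cs_def)
          show "set cs \<subseteq> V" using Pp(2) set_drop_subset cs_def by fastforce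
          fix j assume j: "j < length cs"
          show "E (cs ! j) (cs ! ((j + 1) mod length cs))"
          proof (cases "j + 1 < length cs")
            case True then show ?thesis using Pp(3)[of "i+j"] lcs by (simp add: cs_def)
          next
            case False
            then have "j + 1 = length cs" using j by simp
            then have "i + j = k" using lcs i by (simp add: k_def)
            then have "cs ! j = x" "cs ! ((j+1) mod length cs) = q"
              using \<open>j + 1 = length cs\<close> lcs i by (auto simp: cs_def x_def)
            then show ?thesis using Exq by simp
          qed
        qed
        then show ?thesis using ac by (auto simp: acyclic_graph_def)
      qed
    qed
  qed
  moreover have "x \<in> V" using Pp(2) kP x_def by auto
  ultimately show ?thesis using Exp by blast
qed

definition good_dep :: "'a set \<Rightarrow> ('a \<Rightarrow> 'a \<Rightarrow> bool) \<Rightarrow> 'a \<Rightarrow> ('a \<Rightarrow> nat) \<Rightarrow> bool" where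
  "good_dep V E r dep \<longleftrightarrow> r \<in> V \<and> dep r = 0 \<and> (\<forall>u v. E u v \<longrightarrow> dep u = dep v + 1 \<or> dep v = dep u + 1)
     \<and> (\<forall>v\<in>V. v \<noteq> r \<longrightarrow> (\<exists>!w. E v w \<and> dep w + 1 = dep v))"

lemma tree_dep:
  "simple_graph V E \<Longrightarrow> connected_graph V E \<Longrightarrow> acyclic_graph V E \<Longrightarrow> V \<noteq> {}
   \<Longrightarrow> \<exists>r dep. good_dep V E r dep"
proof (induction "card V" arbitrary: V E rule: less_induct)
  case less
  have fin: "finite V" using less.prems by (simp add: simple_graph_def)
  have sym: "\<And>u v. E u v \<Longrightarrow> E v u" and irr: "\<And>v. \<not> E v v"
    and inV: "\<And>u v. E u v \<Longrightarrow> u \<in> V \<and> v \<in> V" using less.prems by (auto simp: simple_graph_def)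
  show ?case
  proof (cases "2 \<le> card V")
    case False
    have "card V \<noteq> 0" using fin less.prems(4) by simp
    then have "card V = 1" using False by linarith
    then obtain r where Vr: "V = {r}" using card_1_singletonE by blast
    have noE: "\<not> E u v" for u v using inV[of u v] irr[of r] Vr by auto
    have "good_dep V E r (\<lambda>_. 0)" unfolding good_dep_def using Vr noE by simp
    then show ?thesis by blast
  next
    case True
    obtain l p where lV: "l \<in> V" and Elp: "E l p" and leaf: "\<And>q. E l q \<Longrightarrow> q = p"
      using leaf_exists[OF less.prems(1-3) True] by blast
    have pl: "p \<noteq> l" using Elp irr by auto
    have leaf': "\<And>q. E q l \<Longrightarrow> q = p" using leaf sym by blast
    define V' where "V' = V - {l}"
    define E' where "E' = (\<lambda>u v. E u v \<and> u \<noteq> l \<and> v \<noteq> l)"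
    have sg': "simple_graph V' E'" using less.prems(1) unfolding simple_graph_def V'_def E'_def by auto
    have ac': "acyclic_graph V' E'" using less.prems(3)
      unfolding acyclic_graph_def is_cycle_def V'_def E'_def by blast
    have pV': "p \<in> V'" using inV[OF Elp] pl by (simp add: V'_def)
    have reach: "E\<^sup>*\<^sup>* u x \<Longrightarrow> u \<noteq> l \<Longrightarrow> (x \<noteq> l \<longrightarrow> E'\<^sup>*\<^sup>* u x) \<and> (x = l \<longrightarrow> E'\<^sup>*\<^sup>* u p)" for u x
    proof (induction rule: rtranclp_induct)
      case base then show ?case by simp
    next
      case (step y z)
      show ?case
      proof (cases "y = l")
        case True
        then have "z = p" using leaf step.hyps(2) by simp
        then show ?thesis using step.IH[OF step.prems] True pl by simp
      next
        case False
        then have IH: "E'\<^sup>*\<^sup>* u y" using step.IH[OF step.prems] by simp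
        show ?thesis
        proof (cases "z = l")
          case True then have "y = p" using step.hyps(2) leaf' by simp
          then show ?thesis using IH True by simp
        next
          case False
          then have "E' y z" using step.hyps(2) \<open>y \<noteq> l\<close> by (simp add: E'_def)
          then show ?thesis using IH False by (meson rtranclp.rtrancl_into_rtrancl)
        qed
      qed
    qed
    have cg': "connected_graph V' E'" unfolding connected_graph_def
    proof (intro ballI)
      fix u v assume "u \<in> V'" "v \<in> V'"
      then show "E'\<^sup>*\<^sup>* u v" using reach less.prems(2) by (auto simp: V'_def connected_graph_def)
    qed
    have "card V' < card V" 
    proof -
      have "card V' = card V - 1" using lV fin by (simp add: V'_def)
      moreover have "card V > 0" using lV fin card_gt_0_iff by blast
      ultimately show ?thesis by linarith
    qed
    then obtain r dep' where gd: "good_dep V' E' r dep'"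
      using less.hyps sg' cg' ac' pV' by blast
    define dep where "dep = dep'(l := dep' p + 1)"
    have gd1: "r \<in> V'" "dep' r = 0" "\<And>u v. E' u v \<Longrightarrow> dep' u = dep' v + 1 \<or> dep' v = dep' u + 1"
      "\<And>v. v \<in> V' \<Longrightarrow> v \<noteq> r \<Longrightarrow> (\<exists>!w. E' v w \<and> dep' w + 1 = dep' v)"
      using gd unfolding good_dep_def by blast+
    have rl: "r \<noteq> l" "r \<in> V" using gd1(1) by (auto simp: V'_def)
    have "good_dep V E r dep" unfolding good_dep_def
    proof (intro conjI allI impI ballI)
      show "r \<in> V" by fact
      show "dep r = 0" using gd1(2) rl by (simp add: dep_def)
      fix u v assume Euv: "E u v"
      show "dep u = dep v + 1 \<or> dep v = dep u + 1"
      proof (cases "u = l \<or> v = l")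
        case True
        show ?thesis
        proof (cases "u = l")
          case True
          then have "v = p" using leaf Euv by simp
          then show ?thesis using True pl by (simp add: dep_def)
        next
          case False
          then have "v = l" "u = p" using \<open>u = l \<or> v = l\<close> leaf' Euv by auto
          then show ?thesis using pl by (simp add: dep_def)
        qed
      next
        case False
        then have "E' u v" using Euv by (simp add: E'_def)
        then show ?thesis using gd1(3)[of u v] False by (simp add: dep_def)
      qed
    next
      fix v assume vV: "v \<in> V" and vr: "v \<noteq> r"
      show "\<exists>!w. E v w \<and> dep w + 1 = dep v"
      proof (cases "v = l")
        case True
        have "E l p \<and> dep p + 1 = dep l" using Elp pl by (simp add: dep_def)
        then have "\<exists>!w. E l w \<and> dep w + 1 = dep l" using leaf by blast
        then show ?thesis using True by simp
      next
        case False
        then have "v \<in> V'" using vV by (simp add: V'_def)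
        then have ex: "\<exists>!w. E' v w \<and> dep' w + 1 = dep' v" using gd1(4) vr by simp
        have eq: "(E v w \<and> dep w + 1 = dep v) \<longleftrightarrow> (E' v w \<and> dep' w + 1 = dep' v)" for w
        proof (cases "w = l")
          case True
          then show ?thesis using False leaf' by (auto simp: dep_def E'_def)
        next
          case False2: False
          then show ?thesis using False by (simp add: dep_def E'_def)
        qed
        show ?thesis using ex by (simp only: eq)
      qed
    qed
    then show ?thesis by blast
  qed
qed



fun tobits :: "nat \<Rightarrow> nat \<Rightarrow> bool list" where
  "tobits 0 x = []"
| "tobits (Suc L) x = tobits L (x div 2) @ [odd x]"

lemma length_tobits[simp]: "length (tobits L x) = L"
  by (induction L arbitrary: x) auto

lemma foldl_bits: fixes acc :: nat shows "foldl (\<lambda>acc x. 2 * acc + (if x then 1 else 0)) acc ys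
   = acc * 2 ^ length ys + foldl (\<lambda>acc x. 2 * acc + (if x then 1 else 0)) 0 ys"
proof (induction ys arbitrary: acc)
  case Nil then show ?case by simp
next
  case (Cons y ys)
  have "foldl (\<lambda>acc x. 2 * acc + (if x then 1 else 0)) acc (y # ys)
     = foldl (\<lambda>acc x. 2 * acc + (if x then 1 else 0)) (2 * acc + (if y then 1 else 0)) ys" by simp
  also have "\<dots> = (2 * acc + (if y then 1 else 0)) * 2 ^ length ys + foldl (\<lambda>acc x. 2 * acc + (if x then 1 else 0)) 0 ys"
    by (rule Cons.IH)
  also have "foldl (\<lambda>acc x. 2 * acc + (if x then 1 else 0)) (0::nat) (y # ys)
     = (if y then 1 else 0) * 2 ^ length ys + foldl (\<lambda>acc x. 2 * acc + (if x then 1 else 0)) 0 ys"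
  proof -
    have "foldl (\<lambda>acc x. 2 * acc + (if x then 1 else 0)) (0::nat) (y # ys)
      = foldl (\<lambda>acc x. 2 * acc + (if x then 1 else 0)) (if y then 1 else 0) ys" by simp
    also have "\<dots> = (if y then 1 else 0) * 2 ^ length ys + foldl (\<lambda>acc x. 2 * acc + (if x then 1 else 0)) 0 ys"
      by (rule Cons.IH)
    finally show ?thesis .
  qed
  ultimately show ?case by (simp add: algebra_simps)
qed

lemma bits_val_append: "bits_val (xs @ ys) = bits_val xs * 2 ^ length ys + bits_val ys"
  unfolding bits_val_def foldl_append by (rule foldl_bits)

lemma bits_val_single: "bits_val [b] = (if b then 1 else 0)"
  by (simp add: bits_val_def)

lemma bits_val_tobits: "bits_val (tobits L x) = x mod 2 ^ L"
proof (induction L arbitrary: x)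
  case 0 then show ?case by (simp add: bits_val_def)
next
  case (Suc L)
  have "bits_val (tobits (Suc L) x) = (x div 2) mod 2 ^ L * 2 + x mod 2"
    by (simp add: bits_val_append Suc bits_val_single odd_iff_mod_2_eq_one)
  also have "\<dots> = x mod (2 * 2 ^ L)" by (simp add: mod_mult2_eq)
  finally show ?case by simp
qed

lemma bits_concat:
  "bits_val (concat (map (\<lambda>i. tobits L (N div 2 ^ (L * i))) (rev [0..<j]))) = N mod 2 ^ (L * j)"
proof (induction j)
  case 0 then show ?case by (simp add: bits_val_def)
next
  case (Suc j)
  have len: "length (concat (map (\<lambda>i. tobits L (N div 2 ^ (L * i))) (rev [0..<j]))) = L * j"
    by (induction j) auto
  have "bits_val (concat (map (\<lambda>i. tobits L (N div 2 ^ (L * i))) (rev [0..<Suc j])))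
     = (N div 2 ^ (L * j)) mod 2 ^ L * 2 ^ (L * j) + N mod 2 ^ (L * j)"
    by (simp add: bits_val_append bits_val_tobits len Suc)
  also have "\<dots> = N mod (2 ^ (L * j) * 2 ^ L)" by (simp add: mod_mult2_eq)
  also have "2 ^ (L * j) * 2 ^ L = (2::nat) ^ (L * Suc j)" by (simp add: power_add[symmetric] algebra_simps)
  finally show ?case .
qed

lemma card_bound:
  assumes "1 \<le> n" "1 \<le> t"
  shows "n \<le> 2 ^ (dist_label_len n t * t)"
proof -
  define L where "L = dist_label_len n t"
  have lg: "0 \<le> log 2 (real n)" using assms by simp
  have "log 2 (real n) / real t \<le> real_of_int \<lceil>log 2 (real n) / real t\<rceil>" by (rule le_of_int_ceiling)
  moreover have "0 \<le> log 2 (real n) / real t" using lg by simp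
  then have "0 \<le> \<lceil>log 2 (real n) / real t\<rceil>" by simp
  ultimately have "log 2 (real n) / real t \<le> real L" unfolding L_def dist_label_len_def by simp
  then have le: "log 2 (real n) \<le> real (L * t)" using assms by (simp add: divide_le_eq mult.commute)
  have "real n = 2 powr (log 2 (real n))" using assms by simp
  also have "\<dots> \<le> 2 powr real (L * t)" using le by (intro powr_mono) auto
  also have "\<dots> = 2 ^ (L * t)" by (rule powr_realpow) simp
  also have "\<dots> = real (2 ^ (L * t))" by simp
  finally show ?thesis unfolding L_def by linarith
qed



fun pathto :: "('a \<Rightarrow> 'a) \<Rightarrow> 'a \<Rightarrow> nat \<Rightarrow> 'a list" where
  "pathto par v 0 = [v]"
| "pathto par v (Suc k) = pathto par (par v) k @ [v]"

lemma mod_pred_iff: "2 \<le> (t::nat) \<Longrightarrow> (Suc x mod t = 0 \<longleftrightarrow> x mod t = t - 1)"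
  by (auto simp: mod_Suc)

context
  fixes V :: "'a set" and E :: "'a \<Rightarrow> 'a \<Rightarrow> bool" and r :: 'a and dep :: "'a \<Rightarrow> nat" and t :: nat
  assumes sg: "simple_graph V E" and gd: "good_dep V E r dep" and t2: "2 \<le> t"
begin

definition "aL v = dep v mod 3"
definition "bL v = (if dep v mod t = 0 then Head else if dep v mod t = t - 1 then Tail else Mid)"
definition "cL v = odd (dep v div t)"
definition "dL v = tobits (dist_label_len (card V) t) ((dep v div t * t) div 2 ^ (dist_label_len (card V) t * (dep v mod t)))"
definition "par v = (SOME w. E v w \<and> dep w + 1 = dep v)"

lemma inV: "E u v \<Longrightarrow> u \<in> V \<and> v \<in> V" using sg by (simp add: simple_graph_def)
lemma rV: "r \<in> V" and dr: "dep r = 0" using gd by (simp_all add: good_dep_def)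
lemma edge_dep: "E u v \<Longrightarrow> dep u = dep v + 1 \<or> dep v = dep u + 1"
  using gd unfolding good_dep_def by blast
lemma par_uniq: "v \<in> V \<Longrightarrow> v \<noteq> r \<Longrightarrow> \<exists>!w. E v w \<and> dep w + 1 = dep v"
  using gd unfolding good_dep_def by blast

lemma parent_iff: "is_parent E aL v w \<longleftrightarrow> E v w \<and> dep w + 1 = dep v"
proof
  assume h: "is_parent E aL v w"
  then have Evw: "E v w" and m: "(dep w mod 3 + 1) mod 3 = dep v mod 3" by (auto simp: is_parent_def aL_def)
  from edge_dep[OF Evw] show "E v w \<and> dep w + 1 = dep v"
  proof
    assume "dep v = dep w + 1" then show ?thesis using Evw by simp
  next
    assume "dep w = dep v + 1"
    then have False using m by presburger
    then show ?thesis ..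
  qed
next
  assume "E v w \<and> dep w + 1 = dep v"
  then show "is_parent E aL v w" by (auto simp: is_parent_def aL_def mod_Suc_eq)
qed

lemma par_prop: "v \<in> V \<Longrightarrow> v \<noteq> r \<Longrightarrow> E v (par v) \<and> dep (par v) + 1 = dep v"
  unfolding par_def using par_uniq by (rule someI_ex[OF ex1_implies_ex]) 

lemma dep_pos: "v \<in> V \<Longrightarrow> (0 < dep v \<longleftrightarrow> v \<noteq> r)"
  using par_prop dr by force

lemma root_iff: "v \<in> V \<Longrightarrow> is_root E aL v \<longleftrightarrow> v = r"
proof
  assume "v \<in> V" "is_root E aL v"
  then show "v = r" using par_prop[of v] parent_iff unfolding is_root_def by blast
next
  assume "v = r"
  then show "is_root E aL v" unfolding is_root_def parent_iff using dr by simp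
qed

lemma path_dep: "oriented_path V E aL ps \<Longrightarrow> i < length ps \<Longrightarrow> dep (ps ! i) = dep (hd ps) + i"
proof (induction i)
  case 0 then show ?case by (simp add: hd_conv_nth oriented_path_def)
next
  case (Suc i)
  have "is_parent E aL (ps ! Suc i) (ps ! i)" using Suc.prems by (simp add: oriented_path_def)
  then have "dep (ps ! Suc i) = dep (ps ! i) + 1" by (simp add: parent_iff)
  then show ?case using Suc by simp
qed

lemma pathto_props:
  "v \<in> V \<Longrightarrow> k \<le> dep v \<Longrightarrow> oriented_path V E aL (pathto par v k) \<and> length (pathto par v k) = Suc k
     \<and> last (pathto par v k) = v \<and> dep (hd (pathto par v k)) = dep v - k"
proof (induction k arbitrary: v)
  case 0 then show ?case by (simp add: oriented_path_def)
next
  case (Suc k)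
  have vr: "v \<noteq> r" using dep_pos[OF Suc.prems(1)] Suc.prems(2) by simp
  have pp: "E v (par v)" "dep (par v) + 1 = dep v" using par_prop[OF Suc.prems(1) vr] by auto
  have pV: "par v \<in> V" using inV[OF pp(1)] by simp
  define p where "p = pathto par (par v) k"
  have IH: "oriented_path V E aL p" "length p = Suc k" "last p = par v" "dep (hd p) = dep (par v) - k"
    using Suc.IH[OF pV] Suc.prems(2) pp(2) unfolding p_def by auto
  have pne: "p \<noteq> []" using IH(2) by auto
  have "oriented_path V E aL (p @ [v])" unfolding oriented_path_def
  proof (intro conjI allI impI)
    show "p @ [v] \<noteq> []" by simp
    show "set (p @ [v]) \<subseteq> V" using IH(1) Suc.prems(1) by (auto simp: oriented_path_def)
    fix i assume i: "Suc i < length (p @ [v])"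
    show "is_parent E aL ((p @ [v]) ! Suc i) ((p @ [v]) ! i)"
    proof (cases "Suc i < length p")
      case True then show ?thesis using IH(1) by (simp add: nth_append oriented_path_def)
    next
      case False
      then have ii: "Suc i = length p" using i by simp
      then have i1: "i = length p - 1" by simp
      have "(p @ [v]) ! Suc i = v" using ii by (simp add: nth_append)
      moreover have "(p @ [v]) ! i = par v"
        using IH(3) pne ii i1 by (simp add: nth_append last_conv_nth)
      ultimately show ?thesis using pp by (simp add: parent_iff)
    qed
  qed
  then show ?case using IH pne pp(2) by (simp add: p_def[symmetric] hd_append)
qed

lemma dep_bound: "v \<in> V \<Longrightarrow> dep v < card V"
proof -
  assume vV: "v \<in> V"
  define ps where "ps = pathto par v (dep v)"
  have P: "oriented_path V E aL ps" "length ps = Suc (dep v)"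
    using pathto_props[OF vV, of "dep v"] by (auto simp: ps_def)
  have "distinct ps" unfolding distinct_conv_nth
    using path_dep[OF P(1)] by (metis add_left_cancel)
  then have "card (set ps) = Suc (dep v)" using P(2) distinct_card by metis
  moreover have "card (set ps) \<le> card V"
    using P(1) sg by (intro card_mono) (auto simp: oriented_path_def simple_graph_def)
  ultimately show ?thesis by simp
qed

lemma bL_Head: "bL v = Head \<longleftrightarrow> dep v mod t = 0" by (simp add: bL_def)
lemma bL_Tail: "bL v = Tail \<longleftrightarrow> dep v mod t = t - 1"
  using t2 by (auto simp: bL_def)

lemma block_facts:
  assumes "is_block V E t aL bL B"
  shows "hd B \<in> V" "dep (hd B) = t * (dep (hd B) div t)" "length B = t"
    "\<And>i. i < t \<Longrightarrow> dep (B ! i) = dep (hd B) + i" "dep (last B) = dep (hd B) + (t - 1)"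
    "\<And>u. u \<in> set B \<Longrightarrow> dep u div t = dep (hd B) div t" "oriented_path V E aL B"
proof -
  have op: "oriented_path V E aL B" and len: "length B = t" and h: "dep (hd B) mod t = 0"
    using assms by (auto simp: is_block_def bL_Head)
  show "oriented_path V E aL B" "length B = t" by fact+
  show "hd B \<in> V" using op by (auto simp: oriented_path_def)
  show dh: "dep (hd B) = t * (dep (hd B) div t)" using h by (metis add_0_right mult_div_mod_eq)
  show di: "\<And>i. i < t \<Longrightarrow> dep (B ! i) = dep (hd B) + i" using path_dep[OF op] len by simp
  show "dep (last B) = dep (hd B) + (t - 1)"
    using di[of "t - 1"] t2 len op by (simp add: last_conv_nth oriented_path_def)
  fix u assume "u \<in> set B"
  then obtain i where i: "i < t" "u = B ! i" using len by (auto simp: in_set_conv_nth)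
  have "dep u = t * (dep (hd B) div t) + i" using di[OF i(1)] i(2) dh by simp
  then show "dep u div t = dep (hd B) div t" using i(1) by simp
qed

lemma block_value_eq:
  assumes "is_block V E t aL bL B"
  shows "block_value dL B = dep (hd B)"
proof -
  define L where "L = dist_label_len (card V) t"
  define N where "N = dep (hd B)"
  note bf = block_facts[OF assms]
  have dN: "N = t * (N div t)" using bf(2) by (simp add: N_def)
  have "map dL B = map (\<lambda>i. tobits L (N div 2 ^ (L * i))) [0..<t]"
  proof (rule nth_equalityI)
    show "length (map dL B) = length (map (\<lambda>i. tobits L (N div 2 ^ (L * i))) [0..<t])" using bf(3) by simp
    fix i assume "i < length (map dL B)"
    then have i: "i < t" using bf(3) by simp
    define k where "k = N div t"
    have dB: "dep (B ! i) = t * k + i" using bf(4)[OF i] dN by (simp add: N_def k_def)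
    have q: "(t * k + i) div t = k" "(t * k + i) mod t = i" using i t2 by simp_all
    have "dep (B ! i) div t * t = N" "dep (B ! i) mod t = i" using dB q dN
      by (simp_all add: k_def mult.commute)
    then show "map dL B ! i = map (\<lambda>i. tobits L (N div 2 ^ (L * i))) [0..<t] ! i"
      using i bf(3) by (simp add: dL_def L_def)
  qed
  then have "map dL (rev B) = map (\<lambda>i. tobits L (N div 2 ^ (L * i))) (rev [0..<t])"
    by (simp add: rev_map[symmetric])
  then have "block_value dL B = N mod 2 ^ (L * t)" by (simp add: block_value_def bits_concat)
  moreover have "N < 2 ^ (L * t)"
  proof -
    have "N < card V" using dep_bound[OF bf(1)] by (simp add: N_def)
    moreover have "card V \<le> 2 ^ (L * t)" unfolding L_def
      using card_bound[of "card V" t] t2 rV sg card_gt_0_iff by (force simp: simple_graph_def)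
    ultimately show ?thesis by linarith
  qed
  ultimately show ?thesis by (simp add: N_def)
qed

lemma labeling_ok: "correct_acyclicity_labeling V E t aL bL cL dL"
  unfolding correct_acyclicity_labeling_def
proof (intro conjI)
  show "orientation_ok V E aL" unfolding orientation_ok_def
  proof (intro ballI conjI allI impI)
    fix v assume vV: "v \<in> V"
    show "aL v < 3" by (simp add: aL_def)
    fix w1 w2 assume "is_parent E aL v w1 \<and> is_parent E aL v w2"
    then have h: "E v w1 \<and> dep w1 + 1 = dep v" "E v w2 \<and> dep w2 + 1 = dep v" by (auto simp: parent_iff)
    then have "v \<noteq> r" using dr by auto
    then show "w1 = w2" using par_uniq[OF vV] h by blast
  next
    fix v w assume vV: "v \<in> V" and h: "E v w \<and> \<not> is_parent E aL v w"
    then have "dep w = dep v + 1" using edge_dep[of v w] by (auto simp: parent_iff)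
    then show "aL w = (aL v + 1) mod 3" by (simp add: aL_def mod_Suc_eq)
  qed
  show "block_labels_ok V E t aL bL" unfolding block_labels_ok_def
  proof (intro ballI conjI)
    fix v assume vV: "v \<in> V"
    show "bL v = Head \<longleftrightarrow> is_root E aL v \<or> (\<exists>w. is_parent E aL v w \<and> bL w = Tail)"
    proof
      assume "bL v = Head"
      then have h: "dep v mod t = 0" by (simp add: bL_Head)
      show "is_root E aL v \<or> (\<exists>w. is_parent E aL v w \<and> bL w = Tail)"
      proof (cases "v = r")
        case True then show ?thesis using root_iff[OF vV] by simp
      next
        case False
        have pp: "E v (par v)" "dep (par v) + 1 = dep v" using par_prop[OF vV False] by auto
        then have "dep (par v) mod t = t - 1" using h mod_pred_iff[OF t2, of "dep (par v)"] by simp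
        then show ?thesis using pp by (auto simp: parent_iff bL_Tail)
      qed
    next
      assume "is_root E aL v \<or> (\<exists>w. is_parent E aL v w \<and> bL w = Tail)"
      then show "bL v = Head"
      proof
        assume "is_root E aL v" then show ?thesis using root_iff[OF vV] dr by (simp add: bL_Head)
      next
        assume "\<exists>w. is_parent E aL v w \<and> bL w = Tail"
        then obtain w where "dep w + 1 = dep v" "dep w mod t = t - 1" by (auto simp: parent_iff bL_Tail)
        then show ?thesis using mod_pred_iff[OF t2, of "dep w"] by (simp add: bL_Head)
      qed
    qed
    show "bL v = Tail \<longleftrightarrow> (\<exists>ps. is_block V E t aL bL ps \<and> last ps = v)"
    proof
      assume "bL v = Tail"
      then have h: "dep v mod t = t - 1" by (simp add: bL_Tail)
      have ge: "t - 1 \<le> dep v" using h by (metis mod_less_eq_dividend)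
      define ps where "ps = pathto par v (t - 1)"
      have P: "oriented_path V E aL ps" "length ps = t" "last ps = v" "dep (hd ps) = dep v - (t - 1)"
        using pathto_props[OF vV ge] t2 by (auto simp: ps_def)
      have "dep v = t * (dep v div t) + (t - 1)" using h by (metis mult_div_mod_eq)
      then have "dep (hd ps) = t * (dep v div t)" using P(4) by linarith
      then have "dep (hd ps) mod t = 0" by simp
      then show "\<exists>ps. is_block V E t aL bL ps \<and> last ps = v"
        using P by (auto simp: is_block_def bL_Head)
    next
      assume "\<exists>ps. is_block V E t aL bL ps \<and> last ps = v"
      then obtain B where B: "is_block V E t aL bL B" "last B = v" by blast
      note bf = block_facts[OF B(1)]
      define k where "k = dep (hd B) div t"
      have "dep v = (t - 1) + t * k" using bf(5) bf(2) B(2) by (simp add: k_def)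
      then have "dep v mod t = (t - 1) mod t" by (simp only: mod_mult_self2)
      then have "dep v mod t = t - 1" using t2 by simp
      then show "bL v = Tail" by (simp add: bL_Tail)
    qed
    show "bL v = Mid \<longleftrightarrow> \<not> (bL v = Head) \<and> \<not> (bL v = Tail)" by (cases "bL v") auto
    have le: "dep v mod t \<le> dep v" by simp
    define ps where "ps = pathto par v (dep v mod t)"
    have P: "oriented_path V E aL ps" "length ps = Suc (dep v mod t)" "last ps = v"
      "dep (hd ps) = dep v - dep v mod t"
      using pathto_props[OF vV le] by (auto simp: ps_def)
    have "dep (hd ps) = t * (dep v div t)" using P(4) by (metis minus_mod_eq_mult_div)
    then have "bL (hd ps) = Head" by (simp add: bL_Head)
    moreover have "length ps \<le> t" using P(2) t2 by (simp add: Suc_le_eq)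
    ultimately show "\<exists>ps. oriented_path V E aL ps \<and> length ps \<le> t \<and> last ps = v \<and> bL (hd ps) = Head"
      using P by blast
  qed
  show "block_coloring_ok V E t aL bL cL" unfolding block_coloring_ok_def
  proof (intro conjI allI impI ballI)
    fix B u u' assume B: "is_block V E t aL bL B" and u: "u \<in> set B" "u' \<in> set B"
    then show "cL u = cL u'" using block_facts(6)[OF B] by (simp add: cL_def)
  next
    fix B B' u u' assume h: "is_block V E t aL bL B \<and> is_block V E t aL bL B' \<and> block_parent E aL B B'"
      and u: "u \<in> set B" "u' \<in> set B'"
    have B: "is_block V E t aL bL B" and B': "is_block V E t aL bL B'" using h by auto
    have "dep (hd B') = dep (last B) + 1" using h by (simp add: block_parent_def parent_iff)
    then have "dep (hd B') = t * (dep (hd B) div t) + t"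
      using block_facts(5)[OF B] block_facts(2)[OF B] t2 by simp
    then have "dep (hd B') div t = dep (hd B) div t + 1" using t2 by simp
    then show "cL u \<noteq> cL u'" using block_facts(6)[OF B u(1)] block_facts(6)[OF B' u(2)]
      by (simp add: cL_def)
  qed
  show "distance_labels_ok V E t aL bL dL" unfolding distance_labels_ok_def
  proof (intro conjI allI impI ballI)
    fix v show "length (dL v) = dist_label_len (card V) t" by (simp add: dL_def)
  next
    fix B assume B: "is_block V E t aL bL B"
    show "block_value dL B = 0 \<longleftrightarrow> is_root E aL (hd B)"
      using block_value_eq[OF B] root_iff[OF block_facts(1)[OF B]] dep_pos[OF block_facts(1)[OF B]]
      by auto
  next
    fix B B' assume h: "is_block V E t aL bL B \<and> is_block V E t aL bL B' \<and> block_parent E aL B B'"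
    have B: "is_block V E t aL bL B" and B': "is_block V E t aL bL B'" using h by auto
    have "dep (hd B') = dep (last B) + 1" using h by (simp add: block_parent_def parent_iff)
    then have "dep (hd B') = dep (hd B) + t" using block_facts(5)[OF B] t2 by simp
    then show "block_value dL B' = block_value dL B + t"
      using block_value_eq[OF B] block_value_eq[OF B'] by simp
  qed
qed

end



lemma periodic_mult:
  fixes s :: "nat \<Rightarrow> 'a" assumes "\<forall>i. s (i + m) = s i" shows "s (x + m * k) = s x"
proof (induction k)
  case 0 then show ?case by simp
next
  case (Suc k)
  have "s (x + m * Suc k) = s ((x + m * k) + m)" by (simp add: algebra_simps)
  also have "\<dots> = s (x + m * k)" using assms by blast
  finally show ?case using Suc by simp
qed

lemma core_contra:
  fixes s :: "nat \<Rightarrow> 'a"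
  assumes ori: "orientation_ok V E a" and bl: "block_labels_ok V E t a b"
    and dl: "distance_labels_ok V E t a b d"
    and sV: "\<And>i. s i \<in> V" and sp: "\<And>i. is_parent E a (s (Suc i)) (s i)"
    and per: "\<forall>i. s (i + m) = s i" and m1: "1 \<le> m" and t1: "1 \<le> t"
  shows False
proof -
  have blH: "b v = Head" if "v \<in> V" "is_parent E a v w" "b w = Tail" for v w
  proof -
    have "b v = Head \<longleftrightarrow> is_root E a v \<or> (\<exists>w. is_parent E a v w \<and> b w = Tail)"
      using bspec[OF bl[unfolded block_labels_ok_def] that(1)] by (rule conjunct1)
    then show ?thesis using that by blast
  qed
  have blT: "b v = Tail" if "v \<in> V" "is_block V E t a b B" "last B = v" for v B
  proof -
    have "b v = Tail \<longleftrightarrow> (\<exists>ps. is_block V E t a b ps \<and> last ps = v)"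
      using bspec[OF bl[unfolded block_labels_ok_def] that(1)] by (elim conjE)
    then show ?thesis using that by blast
  qed
  have bl4: "\<exists>ps. oriented_path V E a ps \<and> length ps \<le> t \<and> last ps = v \<and> b (hd ps) = Head" if "v \<in> V" for v
    using bspec[OF bl[unfolded block_labels_ok_def] that(1)] by (elim conjE)
  have puniq: "w1 = w2" if "v \<in> V" "is_parent E a v w1" "is_parent E a v w2" for v w1 w2
  proof -
    have "\<forall>w1 w2. is_parent E a v w1 \<and> is_parent E a v w2 \<longrightarrow> w1 = w2"
      using bspec[OF ori[unfolded orientation_ok_def] that(1)] by (elim conjE)
    then show ?thesis using that by blast
  qed
  have uniq: "\<And>n w. 1 \<le> n \<Longrightarrow> is_parent E a (s n) w \<Longrightarrow> w = s (n - 1)"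
  proof -
    fix n w assume n: "1 \<le> n" and pw: "is_parent E a (s n) w"
    have "is_parent E a (s n) (s (n - 1))" using sp[of "n - 1"] n by simp
    then show "w = s (n - 1)" using puniq[OF sV[of n] pw] by simp
  qed
  obtain ps where ps: "oriented_path V E a ps" "length ps \<le> t" "last ps = s t" "b (hd ps) = Head"
    using bl4[OF sV[of t]] by blast
  have psne: "ps \<noteq> []" and pspar: "\<And>i. Suc i < length ps \<Longrightarrow> is_parent E a (ps ! Suc i) (ps ! i)"
    using ps(1) by (auto simp: oriented_path_def)
  have backw: "r < length ps \<Longrightarrow> ps ! (length ps - 1 - r) = s (t - r)" for r
  proof (induction r)
    case 0 then show ?case using ps(3) psne by (simp add: last_conv_nth)
  next
    case (Suc r)
    have IH: "ps ! (length ps - 1 - r) = s (t - r)" using Suc by simp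
    have e1: "Suc (length ps - 1 - Suc r) = length ps - 1 - r" using Suc.prems by simp
    have e2: "Suc (length ps - 1 - Suc r) < length ps" using Suc.prems by simp
    have "is_parent E a (ps ! Suc (length ps - 1 - Suc r)) (ps ! (length ps - 1 - Suc r))"
      by (rule pspar[OF e2])
    then have "is_parent E a (s (t - r)) (ps ! (length ps - 1 - Suc r))" by (simp only: e1 IH)
    moreover have "1 \<le> t - r" using Suc.prems ps(2) by simp
    ultimately have "ps ! (length ps - 1 - Suc r) = s (t - r - 1)" using uniq by blast
    then show ?case by simp
  qed
  define h0 where "h0 = t - (length ps - 1)"
  have hd0: "hd ps = s h0" using backw[of "length ps - 1"] psne by (simp add: hd_conv_nth h0_def)
  define u where "u i = s (h0 + i)" for i
  have uV: "u i \<in> V" for i by (simp add: u_def sV)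
  have up: "is_parent E a (u (Suc i)) (u i)" for i using sp[of "h0 + i"] by (simp add: u_def)
  define blk where "blk j = map (\<lambda>i. u (j * t + i)) [0..<t]" for j
  have blk_len: "length (blk j) = t" for j by (simp add: blk_def)
  have blk_hd: "hd (blk j) = u (j * t)" for j using t1 by (simp add: blk_def hd_map hd_upt)
  have blk_last: "last (blk j) = u (j * t + (t - 1))" for j using t1 by (simp add: blk_def last_map)
  have blk_op: "oriented_path V E a (blk j)" for j
    unfolding oriented_path_def
  proof (intro conjI allI impI)
    show "blk j \<noteq> []" using t1 by (simp add: blk_def)
    show "set (blk j) \<subseteq> V" using uV by (auto simp: blk_def)
    fix i assume "Suc i < length (blk j)"
    then show "is_parent E a (blk j ! Suc i) (blk j ! i)" using up[of "j * t + i"] by (simp add: blk_def)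
  qed
  have head_all: "b (u (j * t)) = Head" for j
  proof (induction j)
    case 0 then show ?case using ps(4) hd0 by (simp add: u_def)
  next
    case (Suc j)
    have "is_block V E t a b (blk j)" using blk_op blk_len blk_hd Suc by (simp add: is_block_def)
    then have "b (u (j * t + (t - 1))) = Tail" using blT[OF uV _ blk_last] by blast
    moreover have "is_parent E a (u (Suc j * t)) (u (j * t + (t - 1)))"
      using up[of "j * t + (t - 1)"] t1 by (simp add: algebra_simps)
    ultimately show ?case using blH[OF uV] by blast
  qed
  have isb: "is_block V E t a b (blk j)" for j using blk_op blk_len blk_hd head_all by (simp add: is_block_def)
  have bp: "block_parent E a (blk j) (blk (Suc j))" for j
    unfolding block_parent_def blk_hd blk_last
    using up[of "j * t + (t - 1)"] t1 by (simp add: algebra_simps)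
  have val: "block_value d (blk j) = block_value d (blk 0) + j * t" for j
  proof (induction j)
    case 0 then show ?case by simp
  next
    case (Suc j)
    have "block_value d (blk (Suc j)) = block_value d (blk j) + t"
      using dl isb bp unfolding distance_labels_ok_def by blast
    then show ?case using Suc by simp
  qed
  have "blk m = blk 0"
    unfolding blk_def
  proof (rule map_cong[OF refl])
    fix i assume "i \<in> set [0..<t]"
    have "u (m * t + i) = s ((h0 + i) + m * t)" by (simp add: u_def algebra_simps)
    also have "\<dots> = s (h0 + i)" using periodic_mult[OF per] by blast
    finally show "u (m * t + i) = u (0 * t + i)" by (simp add: u_def)
  qed
  then have "block_value d (blk 0) + m * t = block_value d (blk 0)" using val[of m] by simp
  then show False using m1 t1 by simp
qed



lemma cycle_seq:
  assumes sg: "simple_graph V E" and ori: "orientation_ok V E a" and cyc: "is_cycle V E cs"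
  shows "\<exists>s m. 1 \<le> (m::nat) \<and> (\<forall>i. s i \<in> V) \<and> (\<forall>i. is_parent E a (s (Suc i)) (s i)) \<and> (\<forall>i. s (i + m) = s i)"
proof -
  have sym: "\<And>u v. E u v \<Longrightarrow> E v u" using sg by (auto simp: simple_graph_def)
  define m where "m = length cs"
  have m3: "3 \<le> m" and dist: "distinct cs" and csV: "set cs \<subseteq> V"
    and cE: "\<And>i. i < m \<Longrightarrow> E (cs ! i) (cs ! ((i + 1) mod m))"
    using cyc by (auto simp: is_cycle_def m_def)
  define f where "f i = cs ! (i mod m)" for i
  have fV: "f i \<in> V" for i
  proof -
    have "i mod m < length cs" using m3 unfolding m_def by (intro mod_less_divisor) linarith
    then have "cs ! (i mod m) \<in> set cs" by (rule nth_mem)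
    then show ?thesis using csV by (auto simp: f_def)
  qed
  have fper: "f (i + m) = f i" for i by (simp add: f_def)
  have fE: "E (f i) (f (Suc i))" for i
    using cE[of "i mod m"] m3 by (simp add: f_def mod_Suc_eq)
  have f2: "f i \<noteq> f (Suc (Suc i))" for i
  proof
    assume "f i = f (Suc (Suc i))"
    moreover have b1: "i mod m < length cs" "Suc (Suc i) mod m < length cs"
      using m3 unfolding m_def by (intro mod_less_divisor, linarith)+
    ultimately have "i mod m = Suc (Suc i) mod m" using nth_eq_iff_index_eq[OF dist b1]
      unfolding f_def by simp
    then have "m dvd 2" using mod_eq_dvd_iff_nat[of i "Suc (Suc i)" m] by simp
    then show False using m3 by (auto dest: dvd_imp_le)
  qed
  have puniq: "w1 = w2" if "v \<in> V" "is_parent E a v w1" "is_parent E a v w2" for v w1 w2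
  proof -
    have "\<forall>w1 w2. is_parent E a v w1 \<and> is_parent E a v w2 \<longrightarrow> w1 = w2"
      using bspec[OF ori[unfolded orientation_ok_def] that(1)] by (elim conjE)
    then show ?thesis using that by blast
  qed
  have oth: "a w = (a v + 1) mod 3" if "v \<in> V" "E v w" "\<not> is_parent E a v w" for v w
  proof -
    have "\<forall>w. E v w \<and> \<not> is_parent E a v w \<longrightarrow> a w = (a v + 1) mod 3"
      using bspec[OF ori[unfolded orientation_ok_def] that(1)] by (elim conjE)
    then show ?thesis using that by blast
  qed
  define fw where "fw i \<longleftrightarrow> is_parent E a (f (Suc i)) (f i)" for i
  define bw where "bw i \<longleftrightarrow> is_parent E a (f i) (f (Suc i))" for i
  have fb: "fw i \<or> bw i" for i
  proof (rule ccontr)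
    assume "\<not> (fw i \<or> bw i)"
    then have "a (f (Suc i)) = (a (f i) + 1) mod 3" using oth[OF fV fE] by (simp add: bw_def)
    then have "is_parent E a (f (Suc i)) (f i)" using sym[OF fE[of i]] by (simp add: is_parent_def)
    then show False using \<open>\<not> (fw i \<or> bw i)\<close> by (simp add: fw_def)
  qed
  have fwS: "fw i \<Longrightarrow> fw (Suc i)" for i
  proof (rule ccontr)
    assume "fw i" "\<not> fw (Suc i)"
    then have "bw (Suc i)" using fb by blast
    then have "f i = f (Suc (Suc i))" using \<open>fw i\<close> puniq[OF fV] unfolding fw_def bw_def by blast
    then show False using f2 by blast
  qed
  show ?thesis
  proof (cases "fw 0")
    case True
    have "fw i" for i by (induction i) (use True fwS in auto)
    then show ?thesis using fV fper m3 unfolding fw_def by (intro exI[of _ f] exI[of _ m]) auto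
  next
    case False
    have nfw: "\<not> fw j" for j
    proof
      assume "fw j"
      have "fw (j + k)" for k by (induction k) (use \<open>fw j\<close> fwS in auto)
      moreover have "j \<le> m * (j + 1)" proof -
        have h: "1 * j \<le> m * j" by (rule mult_le_mono1) (use m3 in linarith)
        have "m * (j + 1) = m * j + m" by (simp add: algebra_simps)
        then show ?thesis using h by linarith
      qed
      ultimately have "fw (j + (m * (j + 1) - j))" by blast
      then have "fw (0 + m * (j + 1))" using \<open>j \<le> m * (j + 1)\<close> by simp
      moreover have "f (0 + m * (j+1)) = f 0" "f (1 + m * (j+1)) = f 1"
        using periodic_mult[of f m "0::nat" "j+1"] periodic_mult[of f m "1::nat" "j+1"] fper by simp_all
      ultimately show False using False by (simp add: fw_def)
    qed
    then have bwa: "bw j" for j using fb by blast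
    define s where "s i = f (m - i mod m)" for i
    have "is_parent E a (s (Suc i)) (s i)" for i
    proof (cases "Suc (i mod m) < m")
      case True
      then have "Suc i mod m = Suc (i mod m)" by (simp add: mod_Suc)
      then have "s (Suc i) = f (m - Suc (i mod m))" "s i = f (Suc (m - Suc (i mod m)))"
        using True by (auto simp: s_def Suc_diff_Suc)
      then show ?thesis using bwa by (simp add: bw_def)
    next
      case False
      have "i mod m < m" using m3 by (intro mod_less_divisor) linarith
      then have "Suc (i mod m) = m" using False by linarith
      then have "Suc i mod m = 0" by (simp add: mod_Suc)
      moreover have "m - i mod m = 1" using \<open>Suc (i mod m) = m\<close> by linarith
      ultimately have "s (Suc i) = f 0" "s i = f 1" using fper[of 0]
        by (auto simp: s_def)
      then show ?thesis using bwa[of 0] by (simp add: bw_def)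
    qed
    moreover have "s (i + m) = s i" for i by (simp add: s_def)
    ultimately show ?thesis using fV m3 by (intro exI[of _ s] exI[of _ m]) (auto simp: s_def)
  qed
qed

theorem proposition2:
  fixes V :: "'a set" and E :: "'a \<Rightarrow> 'a \<Rightarrow> bool" and t :: nat
  assumes "simple_graph V E" and "connected_graph V E" and "2 \<le> t"
  shows "acyclic_graph V E \<longleftrightarrow> (\<exists>a b c d. correct_acyclicity_labeling V E t a b c d)"
proof
  assume ac: "acyclic_graph V E"
  show "\<exists>a b c d. correct_acyclicity_labeling V E t a b c d"
  proof (cases "V = {}")
    case True
    have nb: "\<not> is_block V E t a b B" for a b B
      using True by (auto simp: is_block_def oriented_path_def)
    have "correct_acyclicity_labeling V E t (\<lambda>_. 0) (\<lambda>_. Head) (\<lambda>_. True) (\<lambda>_. [])"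
      unfolding correct_acyclicity_labeling_def orientation_ok_def block_labels_ok_def
        block_coloring_ok_def distance_labels_ok_def using True nb by simp
    then show ?thesis by blast
  next
    case False
    then obtain r dep where gd: "good_dep V E r dep" using tree_dep assms(1,2) ac by blast
    show ?thesis using labeling_ok[OF assms(1) gd assms(3)] by blast
  qed
next
  assume "\<exists>a b c d. correct_acyclicity_labeling V E t a b c d"
  then obtain a b c d where L: "correct_acyclicity_labeling V E t a b c d" by blast
  show "acyclic_graph V E" unfolding acyclic_graph_def
  proof
    assume "\<exists>cs. is_cycle V E cs"
    then obtain cs where cyc: "is_cycle V E cs" by blast
    have ori: "orientation_ok V E a" and bl: "block_labels_ok V E t a b" and dl: "distance_labels_ok V E t a b d"
      using L by (auto simp: correct_acyclicity_labeling_def)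
    obtain s and m :: nat where sm: "1 \<le> m" "\<forall>i. s i \<in> V" "\<forall>i. is_parent E a (s (Suc i)) (s i)" "\<forall>i. s (i + m) = s i"
      using cycle_seq[OF assms(1) ori cyc] by blast
    show False using core_contra[OF ori bl dl, of s m] sm assms(3) by simp
  qed
qed

end
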